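(* In the geometry $\Gamma_\mathbb{F}(\mathbb{A})$: (1) Two distinct lines $[x,u]$ and $[y,v]$ are coplanar (i.e. incident with a common plane) if and only if $(x|y)=(u|v)$; in that case the unique sharp $\mathbb{F}$-morphism $\phi:\mathbb{A}\to\mathbb{O}$ with $\phi(x)=u$ and $\phi(y)=v$ is the unique plane incident with both lines. (2) If two lines are incident with two distinct common points, then they are incident with exactly the same set of points.
   Context: $\mathbb{H}$ and $\mathbb{O}$ are the real quaternions and real octonions, with $\mathbb{C}\subset\mathbb{H}\subset\mathbb{O}$, norm $|\cdot|$, conjugation $x\mapsto\bar x$. Let $(\mathbb{F},\mathbb{A})$ be either $(\mathbb{R},\mathbb{H})$ or $(\mathbb{C},\mathbb{O})$. $\mathbb{A}$ and $\mathbb{O}$ are regarded as right $\mathbb{F}$-vector spaces via right multiplication by elements of $\mathbb{F}$. The real inner product is $(x|y)_\mathbb{R}=\mathrm{Re}(\bar x y)$; for $\mathbb{F}=\mathbb{R}$ put $(x|y)=(x|y)_\mathbb{R}$, and for $\mathbb{F}=\mathbb{C}$ let $(x|y)=(x|y)_\mathbb{C}$ be the $\mathbb{C}$-component of $\bar x y$ in the real-orthogonal decomposition $\mathbb{O}=\mathbb{C}\oplus\mathbb{C}^{\perp}$ (a Hermitian form with real part $(x|y)_\mathbb{R}$). Write $x\perp y$ if $(x|y)=0$. For $\mathbb{B}\in\{\mathbb{A},\mathbb{O}\}$, $\mathrm{Pu}_\mathbb{F}(\mathbb{B})$ is the real-orthogonal complement of $\mathbb{F}$ in $\mathbb{B}$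 (an $\mathbb{F}$-subspace; $\dim_\mathbb{F}\mathrm{Pu}_\mathbb{F}(\mathbb{A})=3$). A sharp $\mathbb{F}$-morphism $\mathbb{A}\to\mathbb{O}$ is an $\mathbb{F}$-linear multiplicative map preserving $(\cdot|\cdot)$. The geometry $\Gamma_\mathbb{F}(\mathbb{A})$ has: points the 1-dimensional $\mathbb{F}$-subspaces $[x]$ of $\mathrm{Pu}_\mathbb{F}(\mathbb{A})$; lines the sets $[x,u]=\{(xt,ut):t\in\mathbb{F}^*\}$ with $x\in\mathrm{Pu}_\mathbb{F}(\mathbb{A})$, $u\in\mathrm{Pu}_\mathbb{F}(\mathbb{O})$, $|x|=|u|\neq0$; planes the sharp $\mathbb{F}$-morphisms $\phi:\mathbb{A}\to\mathbb{O}$. Incidence: every point is incident with every plane; $[y]$ is incident with $[x,u]$ iff $(x|y)=0$; $[x,u]$ is incident with $\phi$ iff $\phi(x)=u$. It is a (flat) geometry of type $C_3$. *)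

theory Defs
  imports Complex_Main
begin

text \<open>Quaternions as pairs of complex numbers and octonions as pairs of quaternions,
  both via the Cayley-Dickson doubling (a,b)(c,d) = (ac - conj(d) b, d a + b conj(c)),
  conj(a,b) = (conj a, -b).\<close>

type_synonym quat = "complex \<times> complex"
type_synonym oct = "quat \<times> quat"

definition qadd :: "quat \<Rightarrow> quat \<Rightarrow> quat" where
  "qadd p q = (fst p + fst q, snd p + snd q)"
definition qneg :: "quat \<Rightarrow> quat" where
  "qneg p = (- fst p, - snd p)"
definition qmul :: "quat \<Rightarrow> quat \<Rightarrow> quat" where
  "qmul p q = (fst p * fst q - cnj (snd q) * snd p, snd q * fst p + snd p * cnj (fst q))"
definition qconj :: "quat \<Rightarrow> quat" where
  "qconj p = (cnj (fst p), - snd p)"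
definition qzero :: quat where "qzero = (0, 0)"

definition oadd :: "oct \<Rightarrow> oct \<Rightarrow> oct" where
  "oadd p q = (qadd (fst p) (fst q), qadd (snd p) (snd q))"
definition omul :: "oct \<Rightarrow> oct \<Rightarrow> oct" where
  "omul p q = (qadd (qmul (fst p) (fst q)) (qneg (qmul (qconj (snd q)) (snd p))),
               qadd (qmul (snd q) (fst p)) (qmul (snd p) (qconj (fst q))))"
definition oconj :: "oct \<Rightarrow> oct" where
  "oconj p = (qconj (fst p), qneg (snd p))"
definition ozero :: oct where "ozero = (qzero, qzero)"

definition oRe :: "oct \<Rightarrow> real" where
  "oRe p = Re (fst (fst p))"
definition onorm :: "oct \<Rightarrow> real" where
  "onorm p = sqrt (oRe (omul (oconj p) p))"

definition remb :: "real \<Rightarrow> oct" where "remb r = ((complex_of_real r, 0), qzero)"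
definition cemb :: "complex \<Rightarrow> oct" where "cemb z = ((z, 0), qzero)"
definition hemb :: "quat \<Rightarrow> oct" where "hemb q = (q, qzero)"

text \<open>The two cases (F,A) = (R,H) and (C,O).\<close>
datatype pair_case = RH | CO

definition Fset :: "pair_case \<Rightarrow> oct set" where
  "Fset c = (case c of RH \<Rightarrow> range remb | CO \<Rightarrow> range cemb)"
definition Aset :: "pair_case \<Rightarrow> oct set" where
  "Aset c = (case c of RH \<Rightarrow> range hemb | CO \<Rightarrow> UNIV)"

text \<open>(x|y): for F = R the real part of conj(x) y; for F = C the C-component of conj(x) y
  in O = C + C^perp.  Values are regarded as elements of F inside O.\<close>
definition herm :: "pair_case \<Rightarrow> oct \<Rightarrow> oct \<Rightarrow> oct" where
  "herm c x y = (case c of RH \<Rightarrow> remb (oRe (omul (oconj x) y))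
                          | CO \<Rightarrow> cemb (fst (fst (omul (oconj x) y))))"

definition Pu :: "pair_case \<Rightarrow> oct set \<Rightarrow> oct set" where
  "Pu c B = {x \<in> B. \<forall>t \<in> Fset c. oRe (omul (oconj x) t) = 0}"

text \<open>Sharp F-morphisms A -> O (only the values on A are relevant).\<close>
definition sharp :: "pair_case \<Rightarrow> (oct \<Rightarrow> oct) \<Rightarrow> bool" where
  "sharp c \<phi> \<longleftrightarrow>
     (\<forall>x \<in> Aset c. \<forall>y \<in> Aset c. \<phi> (oadd x y) = oadd (\<phi> x) (\<phi> y)) \<and>
     (\<forall>x \<in> Aset c. \<forall>t \<in> Fset c. \<phi> (omul x t) = omul (\<phi> x) t) \<and>
     (\<forall>x \<in> Aset c. \<forall>y \<in> Aset c. \<phi> (omul x y) = omul (\<phi> x) (\<phi> y)) \<and>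
     (\<forall>x \<in> Aset c. \<forall>y \<in> Aset c. herm c (\<phi> x) (\<phi> y) = herm c x y)"

definition point_set :: "pair_case \<Rightarrow> oct \<Rightarrow> oct set" where
  "point_set c x = {omul x t | t. t \<in> Fset c}"
definition line_set :: "pair_case \<Rightarrow> oct \<Rightarrow> oct \<Rightarrow> (oct \<times> oct) set" where
  "line_set c x u = {(omul x t, omul u t) | t. t \<in> Fset c \<and> t \<noteq> ozero}"

definition line_params :: "pair_case \<Rightarrow> oct \<Rightarrow> oct \<Rightarrow> bool" where
  "line_params c x u \<longleftrightarrow> x \<in> Pu c (Aset c) \<and> u \<in> Pu c UNIV \<and> onorm x = onorm u \<and> onorm x \<noteq> 0"

definition is_point :: "pair_case \<Rightarrow> oct set \<Rightarrow> bool" where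
  "is_point c P \<longleftrightarrow> (\<exists>x. x \<in> Pu c (Aset c) \<and> x \<noteq> ozero \<and> P = point_set c x)"
definition is_line :: "pair_case \<Rightarrow> (oct \<times> oct) set \<Rightarrow> bool" where
  "is_line c L \<longleftrightarrow> (\<exists>x u. line_params c x u \<and> L = line_set c x u)"

definition inc_point_line :: "pair_case \<Rightarrow> oct set \<Rightarrow> (oct \<times> oct) set \<Rightarrow> bool" where
  "inc_point_line c P L \<longleftrightarrow> (\<exists>x u y. line_params c x u \<and> L = line_set c x u \<and>
      y \<in> Pu c (Aset c) \<and> y \<noteq> ozero \<and> P = point_set c y \<and> herm c x y = ozero)"
definition inc_line_plane :: "pair_case \<Rightarrow> (oct \<times> oct) set \<Rightarrow> (oct \<Rightarrow> oct) \<Rightarrow> bool" where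
  "inc_line_plane c L \<phi> \<longleftrightarrow> (\<exists>x u. line_params c x u \<and> L = line_set c x u \<and> \<phi> x = u)"

end

theory Submission
  imports Defs "HOL-Analysis.Analysis"
begin

lemma oct_cases: obtains a b c d where "(x::oct) = ((a,b),(c,d))" by (metis prod.exhaust)

lemma omul_simp: "omul ((a,b),(c,d)) ((a',b'),(c',d')) =
  ((a*a' - cnj b'*b - cnj c'*c - cnj d*d', b'*a + b*cnj a' - d*cnj c' + d'*cnj c),
   (c'*a - cnj b*d' + c*cnj a' + cnj b'*d, b*c' + d'*cnj a - b'*c + d*a'))"
  by (simp add: omul_def qmul_def qadd_def qneg_def qconj_def algebra_simps)
lemma oconj_simp: "oconj ((a,b),(c,d)) = ((cnj a, -b),(-c,-d))"
  by (simp add: oconj_def qconj_def qneg_def)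
lemma oadd_eq: "oadd x y = x + y" by (simp add: oadd_def qadd_def prod_eq_iff)
lemma ozero_eq: "ozero = 0" by (simp add: ozero_def qzero_def zero_prod_def)
lemma cemb_simp: "cemb t = ((t,0),(0,0))" by (simp add: cemb_def qzero_def)
lemma remb_eq: "remb r = cemb (complex_of_real r)" by (simp add: remb_def cemb_def)
lemma hemb_simp: "hemb q = (q,(0,0))" by (simp add: hemb_def qzero_def)

definition sm :: "oct \<Rightarrow> complex \<Rightarrow> oct" where "sm x t = omul x (cemb t)"
lemma sm_simp: "sm ((a,b),(c,d)) t = ((a*t, b*cnj t),(c*cnj t, d*t))"
  by (simp add: sm_def cemb_simp omul_simp)

definition hC :: "oct \<Rightarrow> oct \<Rightarrow> complex" where "hC x y = fst (fst (omul (oconj x) y))"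
lemma hC_simp: "hC ((a,b),(c,d)) ((a',b'),(c',d')) = cnj a * a' + cnj b' * b + cnj c' * c + cnj d * d'"
  by (simp add: hC_def omul_simp oconj_simp algebra_simps)




lemma omul_add_left: "omul (x + y) z = omul x z + omul y z"
  by (rule oct_cases[of x]; rule oct_cases[of y]; rule oct_cases[of z]; simp add: omul_simp algebra_simps)
lemma omul_add_right: "omul z (x + y) = omul z x + omul z y"
  by (rule oct_cases[of x]; rule oct_cases[of y]; rule oct_cases[of z]; simp add: omul_simp algebra_simps)
lemma omul_zero_left[simp]: "omul 0 z = 0"
  by (rule oct_cases[of z]; simp add: omul_simp zero_prod_def)
lemma omul_zero_right[simp]: "omul z 0 = 0"
  by (rule oct_cases[of z]; simp add: omul_simp zero_prod_def)
lemma alt_left: "omul x (omul x y) = omul (omul x x) y"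
  by (rule oct_cases[of x]; rule oct_cases[of y]; hypsubst_thin; simp add: omul_simp; intro conjI; algebra)
lemma alt_right: "omul (omul y x) x = omul y (omul x x)"
  by (rule oct_cases[of x]; rule oct_cases[of y]; hypsubst_thin; simp add: omul_simp; intro conjI; algebra)
lemma conj_mul_self: "omul (oconj x) x = cemb (hC x x)"
  by (rule oct_cases[of x]; simp add: omul_simp oconj_simp hC_simp cemb_simp; intro conjI; algebra)
lemma norm_mult: "hC (omul x y) (omul x y) = hC x x * hC y y"
  by (rule oct_cases[of x]; rule oct_cases[of y]; hypsubst_thin; simp add: omul_simp hC_simp; algebra)

lemma sm_add_left: "sm (x+y) t = sm x t + sm y t"
  by (rule oct_cases[of x]; rule oct_cases[of y]; hypsubst_thin; simp add: sm_simp algebra_simps)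
lemma sm_add_right: "sm x (s+t) = sm x s + sm x t"
  by (rule oct_cases[of x]; hypsubst_thin; simp add: sm_simp algebra_simps)
lemma sm_assoc: "sm (sm x s) t = sm x (s*t)"
  by (rule oct_cases[of x]; hypsubst_thin; simp add: sm_simp algebra_simps)
lemma sm_one[simp]: "sm x 1 = x"
  by (rule oct_cases[of x]; hypsubst_thin; simp add: sm_simp)
lemma sm_zero_right[simp]: "sm x 0 = 0"
  by (rule oct_cases[of x]; hypsubst_thin; simp add: sm_simp zero_prod_def)
lemma sm_zero_left[simp]: "sm 0 t = 0"
  by (simp add: sm_simp zero_prod_def)
lemma sm_minus: "sm x (-1) = - x"
  by (rule oct_cases[of x]; hypsubst_thin; simp add: sm_simp)
lemma sm_cemb: "sm (cemb s) t = cemb (s*t)"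
  by (simp add: sm_simp cemb_simp)
lemma omul_one_left[simp]: "omul (cemb 1) x = x"
  by (rule oct_cases[of x]; hypsubst_thin; simp add: omul_simp cemb_simp)
lemma omul_one_right[simp]: "omul x (cemb 1) = x"
  by (rule oct_cases[of x]; hypsubst_thin; simp add: omul_simp cemb_simp)
lemma omul_cemb_right: "omul x (cemb t) = sm x t" by (simp add: sm_def)
lemma omul_real_left: "omul (sm g (complex_of_real r)) h = sm (omul g h) (complex_of_real r)"
  by (rule oct_cases[of g]; rule oct_cases[of h]; hypsubst_thin; simp add: omul_simp sm_simp; intro conjI; algebra)
lemma omul_real_right: "omul g (sm h (complex_of_real r)) = sm (omul g h) (complex_of_real r)"
  by (rule oct_cases[of g]; rule oct_cases[of h]; hypsubst_thin; simp add: omul_simp sm_simp; intro conjI; algebra)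
lemma cemb_omul_perp: "fst (fst g) = 0 \<Longrightarrow> omul (cemb \<alpha>) g = sm g (cnj \<alpha>)"
  by (rule oct_cases[of g]; hypsubst_thin; simp add: omul_simp sm_simp cemb_simp)
lemma scal_CO: "fst (fst g) = 0 \<Longrightarrow> fst (fst h) = 0 \<Longrightarrow>
   omul (sm g \<alpha>) (sm h \<beta>) = sm (cemb (fst (fst (omul g h)))) (cnj \<alpha> * \<beta>)
     + sm ((0, snd (fst (omul g h))), snd (omul g h)) (cnj \<alpha> * cnj \<beta>)"
  by (rule oct_cases[of g]; rule oct_cases[of h]; hypsubst_thin; simp add: omul_simp sm_simp cemb_simp; simp add: algebra_simps)

lemma hC_add_left: "hC (x+y) z = hC x z + hC y z"
  by (rule oct_cases[of x]; rule oct_cases[of y]; rule oct_cases[of z]; hypsubst_thin; simp add: hC_simp algebra_simps)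
lemma hC_add_right: "hC z (x+y) = hC z x + hC z y"
  by (rule oct_cases[of x]; rule oct_cases[of y]; rule oct_cases[of z]; hypsubst_thin; simp add: hC_simp algebra_simps)
lemma hC_sm_right: "hC x (sm y t) = hC x y * t"
  by (rule oct_cases[of x]; rule oct_cases[of y]; hypsubst_thin; simp add: hC_simp sm_simp algebra_simps)
lemma hC_sm_left: "hC (sm x t) y = cnj t * hC x y"
  by (rule oct_cases[of x]; rule oct_cases[of y]; hypsubst_thin; simp add: hC_simp sm_simp algebra_simps)
lemma hC_sym: "hC y x = cnj (hC x y)"
  by (rule oct_cases[of x]; rule oct_cases[of y]; hypsubst_thin; simp add: hC_simp algebra_simps)
lemma hC_inner: "Re (hC x y) = inner x y"
  by (rule oct_cases[of x]; rule oct_cases[of y]; hypsubst_thin; simp add: hC_simp inner_complex_def algebra_simps)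
lemma hC_self: "hC x x = complex_of_real (inner x x)"
  by (rule oct_cases[of x]; hypsubst_thin; simp add: hC_simp inner_complex_def complex_eq_iff algebra_simps)
lemma hC_one_left: "hC (cemb 1) z = fst (fst z)"
  by (rule oct_cases[of z]; hypsubst_thin; simp add: hC_simp cemb_simp)
lemma hC_zero_right[simp]: "hC x 0 = 0"
  by (rule oct_cases[of x]; hypsubst_thin; simp add: hC_simp zero_prod_def)
lemma oconj_pure: "cnj (fst (fst x)) = - fst (fst x) \<Longrightarrow> oconj x = sm x (-1)"
  by (rule oct_cases[of x]; hypsubst_thin; simp add: oconj_simp sm_simp)
lemma mul_anti: "cnj (fst (fst x)) = - fst (fst x) \<Longrightarrow> cnj (fst (fst y)) = - fst (fst y) \<Longrightarrow>
   omul x y + omul y x = cemb (-(hC x y + hC y x))"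
  by (rule oct_cases[of x]; rule oct_cases[of y]; hypsubst_thin; simp add: omul_simp hC_simp cemb_simp; intro conjI; algebra)
lemma hC_pure_left: "cnj (fst (fst x)) = - fst (fst x) \<Longrightarrow> hC x y = - fst (fst (omul x y))"
  by (rule oct_cases[of x]; rule oct_cases[of y]; hypsubst_thin; simp add: omul_simp hC_simp; algebra)
lemma onorm_eq: "Defs.onorm x = norm x"
  unfolding Defs.onorm_def oRe_def norm_eq_sqrt_inner by (metis hC_def hC_inner)
lemma oRe_eq: "oRe (omul (oconj x) y) = Re (hC x y)"
  by (simp add: oRe_def hC_def)
lemma fst_fst_add: "fst (fst (x+y)) = fst (fst x) + fst (fst y)" by simp
lemma fst_fst_sm: "fst (fst (sm x t)) = fst (fst x) * t"
  by (rule oct_cases[of x]; hypsubst_thin; simp add: sm_simp)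
lemma fst_fst_cemb[simp]: "fst (fst (cemb t)) = t" by (simp add: cemb_simp)
lemma cemb_add: "cemb s + cemb t = cemb (s+t)" by (simp add: cemb_simp)
lemma cemb_mul: "omul (cemb s) (cemb t) = cemb (s*t)" by (simp add: cemb_simp omul_simp)
lemma cemb_inj: "cemb s = cemb t \<longleftrightarrow> s = t" by (simp add: cemb_simp)
lemma cemb_zero: "cemb 0 = 0" by (simp add: cemb_simp zero_prod_def)

definition sc :: "pair_case \<Rightarrow> complex set" where
  "sc c = (case c of RH \<Rightarrow> range complex_of_real | CO \<Rightarrow> UNIV)"
definition hh :: "pair_case \<Rightarrow> oct \<Rightarrow> oct \<Rightarrow> complex" where
  "hh c x y = (case c of RH \<Rightarrow> complex_of_real (Re (hC x y)) | CO \<Rightarrow> hC x y)"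
definition pure :: "pair_case \<Rightarrow> oct \<Rightarrow> bool" where
  "pure c x \<longleftrightarrow> hh c (cemb 1) x = 0"

lemma herm_hh: "herm c x y = cemb (hh c x y)"
  by (cases c) (simp_all add: herm_def hh_def remb_eq hC_def oRe_def)
lemma remb_fun: "remb = cemb \<circ> complex_of_real" by (rule ext) (simp add: remb_eq)
lemma Fset_sc: "Fset c = cemb ` sc c"
  by (cases c) (simp_all add: Fset_def sc_def remb_fun image_comp)

lemma sc_cnj: "t \<in> sc c \<Longrightarrow> cnj t \<in> sc c" by (cases c) (auto simp: sc_def)
lemma sc_mult: "s \<in> sc c \<Longrightarrow> t \<in> sc c \<Longrightarrow> s * t \<in> sc c"
  by (cases c) (auto simp: sc_def simp flip: of_real_mult)
lemma sc_add: "s \<in> sc c \<Longrightarrow> t \<in> sc c \<Longrightarrow> s + t \<in> sc c"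
  by (cases c) (auto simp: sc_def simp flip: of_real_add)
lemma sc_of_real[simp]: "complex_of_real r \<in> sc c" by (cases c) (auto simp: sc_def)
lemma sc_one[simp]: "1 \<in> sc c" by (cases c) (auto simp: sc_def)
lemma sc_zero[simp]: "0 \<in> sc c" by (cases c) (auto simp: sc_def)
lemma sc_minus: "s \<in> sc c \<Longrightarrow> - s \<in> sc c"
proof -
  assume "s \<in> sc c"
  moreover have "- s = s * complex_of_real (-1)" by simp
  ultimately show ?thesis by (metis sc_mult sc_of_real)
qed
lemma sc_inverse: "s \<in> sc c \<Longrightarrow> inverse s \<in> sc c"
  by (cases c) (auto simp: sc_def simp flip: of_real_inverse)
lemma sc_RH_cnj: "t \<in> sc RH \<Longrightarrow> cnj t = t" by (auto simp: sc_def)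
lemma sc_RH: "t \<in> sc RH \<Longrightarrow> \<exists>r. t = complex_of_real r" by (auto simp: sc_def)

lemma hh_add_right: "hh c z (x+y) = hh c z x + hh c z y"
  by (cases c) (simp_all add: hh_def hC_add_right)
lemma hh_add_left: "hh c (x+y) z = hh c x z + hh c y z"
  by (cases c) (simp_all add: hh_def hC_add_left)
lemma hh_sm_right: "t \<in> sc c \<Longrightarrow> hh c x (sm y t) = hh c x y * t"
  by (cases c) (auto simp: hh_def hC_sm_right sc_def)
lemma hh_sm_left: "t \<in> sc c \<Longrightarrow> hh c (sm x t) y = cnj t * hh c x y"
  by (cases c) (auto simp: hh_def hC_sm_left sc_def)
lemma hh_sym: "hh c y x = cnj (hh c x y)"
  by (cases c) (simp_all add: hh_def hC_sym[of y x])
lemma hh_self: "hh c x x = complex_of_real (inner x x)"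
  by (cases c) (auto simp: hh_def hC_self)
lemma hh_Re: "Re (hh c x y) = inner x y"
  by (cases c) (auto simp: hh_def hC_inner)
lemma hh_sc: "hh c x y \<in> sc c"
  by (cases c) (auto simp: hh_def sc_def)
lemma hh_zero_right[simp]: "hh c x 0 = 0" by (cases c) (auto simp: hh_def)
lemma hh_zero_left[simp]: "hh c 0 x = 0" by (metis hh_sym hh_zero_right complex_cnj_zero)
lemma hh_one_left: "hh c (cemb 1) z = (case c of RH \<Rightarrow> complex_of_real (Re (fst (fst z))) | CO \<Rightarrow> fst (fst z))"
  by (cases c) (auto simp: hh_def hC_one_left)
lemma hh_pure_left: "cnj (fst (fst x)) = - fst (fst x) \<Longrightarrow> hh c x y = - hh c (cemb 1) (omul x y)"
  by (cases c) (auto simp: hh_def hC_one_left hC_pure_left)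
lemma hh_self_zero: "hh c x x = 0 \<longleftrightarrow> x = 0"
  by (simp add: hh_self)

lemma hC_cemb_right: "hC x (cemb s) = cnj (fst (fst x)) * s"
  by (rule oct_cases[of x]; hypsubst_thin; simp add: hC_simp cemb_simp)
lemma Pu_iff: "x \<in> Pu c B \<longleftrightarrow> x \<in> B \<and> pure c x"
proof -
  have e: "oRe (omul (oconj x) (cemb s)) = Re (cnj (fst (fst x)) * s)" for s
    by (simp add: oRe_eq hC_cemb_right)
  have key: "(\<forall>t\<in>Fset c. oRe (omul (oconj x) t) = 0) \<longleftrightarrow> pure c x"
  proof (cases c)
    case RH
    have "(\<forall>t\<in>Fset c. oRe (omul (oconj x) t) = 0) \<longleftrightarrow> (\<forall>r. Re (cnj (fst (fst x)) * complex_of_real r) = 0)"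
      by (simp add: RH Fset_sc sc_def e)
    also have "\<dots> \<longleftrightarrow> Re (fst (fst x)) = 0" proof -
      have "Re (cnj (fst (fst x)) * complex_of_real r) = Re (fst (fst x)) * r" for r
        by (cases "fst (fst x)") simp
      then show ?thesis by (metis mult_1_right mult_zero_left)
    qed
    finally show ?thesis by (simp add: pure_def hh_one_left RH)
  next
    case CO
    have "(\<forall>t\<in>Fset c. oRe (omul (oconj x) t) = 0) \<longleftrightarrow> (\<forall>t. Re (cnj (fst (fst x)) * t) = 0)"
      by (simp add: CO Fset_sc sc_def e)
    also have "\<dots> \<longleftrightarrow> fst (fst x) = 0"
    proof
      assume h: "\<forall>t. Re (cnj (fst (fst x)) * t) = 0"
      from h[rule_format, of 1] h[rule_format, of \<i>] show "fst (fst x) = 0"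
        by (simp add: complex_eq_iff)
    qed simp
    finally show ?thesis by (simp add: pure_def hh_one_left CO)
  qed
  show ?thesis by (simp add: Pu_def key)
qed

lemma pure_rp: "pure c x \<Longrightarrow> cnj (fst (fst x)) = - fst (fst x)"
  by (cases c; simp add: pure_def hh_one_left; simp add: complex_eq_iff)
lemma pure_CO: "pure CO x \<Longrightarrow> fst (fst x) = 0"
  by (auto simp: pure_def hh_one_left)
lemma pure_add: "pure c x \<Longrightarrow> pure c y \<Longrightarrow> pure c (x+y)"
  by (simp add: pure_def hh_add_right)
lemma pure_sm: "pure c x \<Longrightarrow> t \<in> sc c \<Longrightarrow> pure c (sm x t)"
  by (simp add: pure_def hh_sm_right)
lemma pure_zero[simp]: "pure c 0" by (simp add: pure_def)

lemma Aset_RH: "x \<in> Aset RH \<longleftrightarrow> snd x = (0,0)"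
  unfolding Aset_def by (auto simp: hemb_simp image_iff) (metis prod.collapse)
lemma Aset_CO[simp]: "Aset CO = UNIV" by (simp add: Aset_def)
lemma Aset_add: "x \<in> Aset c \<Longrightarrow> y \<in> Aset c \<Longrightarrow> x + y \<in> Aset c"
  by (cases c; simp only: Aset_RH Aset_CO; simp)
lemma Aset_sm: "x \<in> Aset c \<Longrightarrow> sm x t \<in> Aset c"
  by (cases c; rule oct_cases[of x]; hypsubst_thin; simp only: Aset_RH Aset_CO; simp add: sm_simp)
lemma Aset_mul: "x \<in> Aset c \<Longrightarrow> y \<in> Aset c \<Longrightarrow> omul x y \<in> Aset c"
  by (cases c; rule oct_cases[of x]; rule oct_cases[of y]; hypsubst_thin; simp only: Aset_RH Aset_CO; simp add: omul_simp)
lemma Aset_cemb[simp]: "cemb t \<in> Aset c"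
  by (cases c; simp only: Aset_RH Aset_CO; simp add: cemb_simp)
lemma Aset_zero[simp]: "0 \<in> Aset c"
  by (metis Aset_cemb cemb_zero)

lemma omul_neg_left: "omul (-x) y = - omul x y"
  by (rule oct_cases[of x]; rule oct_cases[of y]; hypsubst_thin; simp add: omul_simp algebra_simps)
lemma omul_neg_right: "omul x (-y) = - omul x y"
  by (rule oct_cases[of x]; rule oct_cases[of y]; hypsubst_thin; simp add: omul_simp algebra_simps)
lemma sm_neg: "sm (-x) t = - sm x t"
  by (rule oct_cases[of x]; hypsubst_thin; simp add: sm_simp)
lemma neg_sm: "- x = sm x (-1)" by (simp add: sm_minus)
lemma hh_neg_right: "hh c x (-y) = - hh c x y"
  using hh_sm_right[of "-1" c x y] by (simp add: sc_minus sm_minus)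
lemma hh_neg_left: "hh c (-x) y = - hh c x y"
  by (metis complex_cnj_minus hh_neg_right hh_sym)
lemma P_id: "fst (fst w) = 0 \<Longrightarrow> ((0, snd (fst w)), snd w) = w"
  by (metis prod.collapse)
lemma hC_hh_self: "hC x x = hh c x x" by (simp add: hC_self hh_self)
lemma sq_pure: "cnj (fst (fst x)) = - fst (fst x) \<Longrightarrow> omul x x = cemb (- hC x x)"
proof -
  assume r: "cnj (fst (fst x)) = - fst (fst x)"
  have "omul (sm x (complex_of_real (-1))) x = cemb (hC x x)"
    using conj_mul_self[of x] oconj_pure[OF r] by simp
  then have "sm (omul x x) (-1) = cemb (hC x x)" by (simp add: omul_real_left[of x "-1", simplified])
  then have "sm (sm (omul x x) (-1)) (-1) = sm (cemb (hC x x)) (-1)" by simp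
  then show ?thesis by (simp add: sm_assoc sm_cemb)
qed
lemma cemb_neg[simp]: "cemb (-t) = - cemb t" by (simp add: cemb_simp)
declare omul_neg_left[simp] omul_neg_right[simp]
lemma cemb_neg_omul: "omul (cemb (-1)) y = - y" by simp
lemma omul_cemb_neg1: "omul y (cemb (-1)) = - y" by simp

definition frame :: "pair_case \<Rightarrow> oct \<Rightarrow> oct \<Rightarrow> bool" where
  "frame c a b \<longleftrightarrow> pure c a \<and> pure c b \<and> hh c a a = 1 \<and> hh c b b = 1 \<and> hh c a b = 0"

context
  fixes c a b assumes fr: "frame c a b"
begin
lemma fa: "pure c a" and fb: "pure c b" and faa: "hh c a a = 1" and fbb: "hh c b b = 1" and fab: "hh c a b = 0"
  using fr by (auto simp: frame_def)
lemma ra: "cnj (fst (fst a)) = - fst (fst a)" using pure_rp[OF fa] .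
lemma rb: "cnj (fst (fst b)) = - fst (fst b)" using pure_rp[OF fb] .
lemma fba: "hh c b a = 0" using fab hh_sym[of c a b] by simp
lemma m_aa: "omul a a = cemb (-1)" using sq_pure[OF ra] faa by (simp add: hC_hh_self[of a c])
lemma m_bb: "omul b b = cemb (-1)" using sq_pure[OF rb] fbb by (simp add: hC_hh_self[of b c])
lemma m_ba: "omul b a = - omul a b"
proof -
  have "Re (hC a b) = 0" using fab hh_Re[of c a b] hC_inner[of a b] by simp
  then have "hC a b + hC b a = 0" by (simp add: hC_sym[of b a] complex_eq_iff)
  then have "omul a b + omul b a = 0" using mul_anti[OF ra rb] by (simp add: cemb_zero)
  then show ?thesis by (simp add: add_eq_0_iff)
qed
lemma m_a_ab: "omul a (omul a b) = - b" by (simp add: alt_left m_aa cemb_neg_omul)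
lemma m_ab_b: "omul (omul a b) b = - a" by (simp add: alt_right m_bb sm_minus)
lemma m_ab_a: "omul (omul a b) a = b"
proof -
  have "omul (omul a b) a = - omul (omul b a) a" by (simp add: m_ba omul_neg_left)
  also have "\<dots> = b" by (simp add: alt_right m_aa sm_minus)
  finally show ?thesis .
qed
lemma m_b_ab: "omul b (omul a b) = a"
proof -
  have "omul b (omul a b) = - omul b (omul b a)" by (simp add: m_ba omul_neg_right)
  also have "\<dots> = a" by (simp add: alt_left m_bb cemb_neg_omul)
  finally show ?thesis .
qed
lemma pure_ab: "pure c (omul a b)"
  using hh_pure_left[OF ra, of c b] fab by (simp add: pure_def)
lemma r_ab: "cnj (fst (fst (omul a b))) = - fst (fst (omul a b))" using pure_rp[OF pure_ab] .
lemma h_a_ab: "hh c a (omul a b) = 0"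
  using hh_pure_left[OF ra, of c "omul a b"] fb by (simp add: m_a_ab hh_neg_right pure_def)
lemma h_b_ab: "hh c b (omul a b) = 0"
  using hh_pure_left[OF rb, of c "omul a b"] fa by (simp add: m_b_ab pure_def)
lemma h_ab_ab: "hh c (omul a b) (omul a b) = 1"
  using norm_mult[of a b] faa fbb by (simp add: hC_hh_self[of _ c])
lemma m_abab: "omul (omul a b) (omul a b) = cemb (-1)"
  using sq_pure[OF r_ab] h_ab_ab by (simp add: hC_hh_self[of _ c])
end

definition fr :: "oct \<Rightarrow> oct \<Rightarrow> nat \<Rightarrow> oct" where
  "fr a b i = (if i = 0 then cemb 1 else if i = 1 then a else if i = 2 then b else omul a b)"
definition tk :: "nat \<Rightarrow> nat \<Rightarrow> nat" where
  "tk i j = (if i = 0 then j else if j = 0 then i else if i = j then 0 else 6 - i - j)"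
definition te :: "nat \<Rightarrow> nat \<Rightarrow> real" where
  "te i j = (if i = 0 \<or> j = 0 then 1 else if i = j then -1
     else if (i,j) = (1,2) \<or> (i,j) = (2,3) \<or> (i,j) = (3,1) then 1 else -1)"

lemma less4: "i < (4::nat) \<longleftrightarrow> i = 0 \<or> i = 1 \<or> i = 2 \<or> i = 3" by auto

lemma fr_mul: assumes "frame c a b" "i < 4" "j < 4"
  shows "omul (fr a b i) (fr a b j) = sm (fr a b (tk i j)) (complex_of_real (te i j))"
  using assms(2,3) unfolding less4
  by (elim disjE; simp add: fr_def tk_def te_def sm_cemb sm_minus cemb_neg_omul
      m_aa[OF assms(1)] m_bb[OF assms(1)] m_ba[OF assms(1)] m_a_ab[OF assms(1)] m_ab_b[OF assms(1)]
      m_ab_a[OF assms(1)] m_b_ab[OF assms(1)] m_abab[OF assms(1)])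

lemma hh_one_one: "hh c (cemb 1) (cemb 1) = 1" by (cases c) (simp_all add: hh_one_left)

lemma fr_orth: assumes "frame c a b" "i < 4" "j < 4"
  shows "hh c (fr a b i) (fr a b j) = (if i = j then 1 else 0)"
proof -
  note F = fa[OF assms(1)] fb[OF assms(1)] pure_ab[OF assms(1)]
  have s: "hh c x (cemb 1) = 0" if "pure c x" for x
    using that hh_sym[of c x "cemb 1"] by (simp add: pure_def)
  show ?thesis using assms(2,3) unfolding less4
    by (elim disjE; simp add: fr_def hh_one_one F[unfolded pure_def] s F
        faa[OF assms(1)] fbb[OF assms(1)] fab[OF assms(1)] fba[OF assms(1)] h_a_ab[OF assms(1)]
        h_b_ab[OF assms(1)] h_ab_ab[OF assms(1)] hh_sym[of c "omul a b" a] hh_sym[of c "omul a b" b])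
qed

lemma fr_pure: "frame c a b \<Longrightarrow> 0 < i \<Longrightarrow> pure c (fr a b i)"
  by (auto simp: fr_def fa fb pure_ab)
lemma fr_Aset: "a \<in> Aset c \<Longrightarrow> b \<in> Aset c \<Longrightarrow> fr a b i \<in> Aset c"
  by (auto simp: fr_def Aset_mul)
lemma tk_less: "i < 4 \<Longrightarrow> j < 4 \<Longrightarrow> tk i j < 4" by (auto simp: tk_def)
lemma tk_pos: "i < 4 \<Longrightarrow> j < 4 \<Longrightarrow> 0 < i \<Longrightarrow> 0 < j \<Longrightarrow> i \<noteq> j \<Longrightarrow> 0 < tk i j" by (auto simp: tk_def)
lemma tk_same: "tk i i = (if i = 0 then 0 else 0)" by (auto simp: tk_def)

definition gam :: "pair_case \<Rightarrow> nat \<Rightarrow> nat \<Rightarrow> complex \<Rightarrow> complex \<Rightarrow> complex" where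
  "gam c i j \<alpha> \<beta> = (case c of RH \<Rightarrow> \<alpha> * \<beta> | CO \<Rightarrow>
     (if i = 0 then (if j = 0 then \<alpha> * \<beta> else cnj \<alpha> * \<beta>) else if j = 0 then \<alpha> * \<beta>
      else if i = j then cnj \<alpha> * \<beta> else cnj \<alpha> * cnj \<beta>))"

lemma gam_sc: "\<alpha> \<in> sc c \<Longrightarrow> \<beta> \<in> sc c \<Longrightarrow> gam c i j \<alpha> \<beta> \<in> sc c"
  by (cases c) (auto simp: gam_def sc_mult sc_cnj)

lemma fr_scal:
  assumes F: "frame c a b" and ij: "i < 4" "j < 4" and s: "\<alpha> \<in> sc c" "\<beta> \<in> sc c"
  shows "omul (sm (fr a b i) \<alpha>) (sm (fr a b j) \<beta>) = sm (omul (fr a b i) (fr a b j)) (gam c i j \<alpha> \<beta>)"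
proof (cases c)
  case RH
  obtain r where r: "\<alpha> = complex_of_real r" using sc_RH s(1) RH by blast
  obtain q where q: "\<beta> = complex_of_real q" using sc_RH s(2) RH by blast
  show ?thesis by (simp add: RH r q gam_def omul_real_left omul_real_right sm_assoc mult.commute)
next
  case CO
  have pp: "fst (fst (fr a b k)) = 0" if "0 < k" for k
    using fr_pure[OF F that] CO pure_CO by blast
  show ?thesis
  proof (cases "i = 0")
    case i0: True
    show ?thesis
    proof (cases "j = 0")
      case True then show ?thesis using i0 by (simp add: fr_def sm_cemb cemb_mul gam_def CO)
    next
      case False
      have "fst (fst (sm (fr a b j) \<beta>)) = 0" using pp[of j] False by (simp add: fst_fst_sm)
      then show ?thesis using i0 False
        by (simp add: fr_def[of a b 0] sm_cemb cemb_omul_perp sm_assoc gam_def CO mult.commute)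
    qed
  next
    case i1: False
    show ?thesis
    proof (cases "j = 0")
      case True then show ?thesis using i1
        by (simp add: fr_def[of a b 0] sm_cemb omul_cemb_right sm_assoc gam_def CO)
    next
      case j1: False
      have M: "omul (fr a b i) (fr a b j) = sm (fr a b (tk i j)) (complex_of_real (te i j))"
        by (rule fr_mul[OF F ij])
      have S: "omul (sm (fr a b i) \<alpha>) (sm (fr a b j) \<beta>) =
          sm (cemb (fst (fst (omul (fr a b i) (fr a b j))))) (cnj \<alpha> * \<beta>)
        + sm ((0, snd (fst (omul (fr a b i) (fr a b j)))), snd (omul (fr a b i) (fr a b j))) (cnj \<alpha> * cnj \<beta>)"
        using scal_CO[OF pp pp] i1 j1 by simp
      show ?thesis
      proof (cases "i = j")
        case True
        then have "omul (fr a b i) (fr a b j) = cemb (-1)"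
          using M i1 by (simp add: tk_def te_def fr_def sm_cemb)
        then show ?thesis using S True i1 by (simp add: gam_def CO cemb_simp zero_prod_def sm_def omul_simp)
      next
        case False
        have "0 < tk i j" using tk_pos[OF ij] i1 j1 False by simp
        then have "fst (fst (omul (fr a b i) (fr a b j))) = 0" using M pp by (simp add: fst_fst_sm)
        then show ?thesis using S False i1 j1 by (simp add: gam_def CO P_id cemb_zero)
      qed
    qed
  qed
qed

definition ex :: "(nat \<Rightarrow> oct) \<Rightarrow> (nat \<Rightarrow> complex) \<Rightarrow> oct" where
  "ex g \<alpha> = sm (g 0) (\<alpha> 0) + sm (g 1) (\<alpha> 1) + sm (g 2) (\<alpha> 2) + sm (g 3) (\<alpha> 3)"
definition phi :: "pair_case \<Rightarrow> (nat \<Rightarrow> oct) \<Rightarrow> (nat \<Rightarrow> oct) \<Rightarrow> oct \<Rightarrow> oct" where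
  "phi c g f z = ex f (\<lambda>k. hh c (g k) z)"

lemma hh_fr_ex: assumes F: "frame c a b" and k: "k < 4" and s: "\<And>k. \<alpha> k \<in> sc c"
  shows "hh c (fr a b k) (ex (fr a b) \<alpha>) = \<alpha> k"
  using fr_orth[OF F k, of 0] fr_orth[OF F k, of 1] fr_orth[OF F k, of 2] fr_orth[OF F k, of 3] k
  by (auto simp: ex_def hh_add_right hh_sm_right s less4)

lemma hh_ex: assumes F: "frame c a b" and s: "\<And>k. \<alpha> k \<in> sc c" "\<And>k. \<beta> k \<in> sc c"
  shows "hh c (ex (fr a b) \<alpha>) (ex (fr a b) \<beta>) =
     cnj (\<alpha> 0) * \<beta> 0 + cnj (\<alpha> 1) * \<beta> 1 + cnj (\<alpha> 2) * \<beta> 2 + cnj (\<alpha> 3) * \<beta> 3"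
proof -
  have "hh c (ex (fr a b) \<alpha>) (ex (fr a b) \<beta>) = 
     cnj (\<alpha> 0) * hh c (fr a b 0) (ex (fr a b) \<beta>) + cnj (\<alpha> 1) * hh c (fr a b 1) (ex (fr a b) \<beta>)
     + cnj (\<alpha> 2) * hh c (fr a b 2) (ex (fr a b) \<beta>) + cnj (\<alpha> 3) * hh c (fr a b 3) (ex (fr a b) \<beta>)"
    unfolding ex_def[of _ \<alpha>] by (simp add: hh_add_left hh_sm_left s)
  then show ?thesis by (simp add: hh_fr_ex[OF F _ s(2)])
qed

lemma ex_add: "ex g \<alpha> + ex g \<beta> = ex g (\<lambda>k. \<alpha> k + \<beta> k)"
  by (simp add: ex_def sm_add_right algebra_simps)
lemma ex_sm: "sm (ex g \<alpha>) t = ex g (\<lambda>k. \<alpha> k * t)"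
  by (simp add: ex_def sm_add_left sm_assoc)

lemma phi_add: "phi c g f (z + w) = phi c g f z + phi c g f w"
  by (simp add: phi_def ex_add hh_add_right)
lemma phi_sm: "t \<in> sc c \<Longrightarrow> phi c g f (sm z t) = sm (phi c g f z) t"
  by (simp add: phi_def ex_sm hh_sm_right)
lemma phi_neg: "phi c g f (- z) = - phi c g f z"
  using phi_sm[of "-1" c g f z] by (simp add: sm_minus sc_minus)

lemma phi_basis: assumes F: "frame c a b" and k: "k < 4" and t: "t \<in> sc c"
  shows "phi c (fr a b) f (sm (fr a b k) t) = sm (f k) t"
  using fr_orth[OF F _ k, of 0] fr_orth[OF F _ k, of 1] fr_orth[OF F _ k, of 2] fr_orth[OF F _ k, of 3] k
  by (auto simp: phi_def ex_def hh_sm_right t less4)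

lemma orth8:
  fixes L :: "oct list" and w :: oct
  assumes len: "length L = 8"
    and on: "\<And>i j. i < 8 \<Longrightarrow> j < 8 \<Longrightarrow> inner (L!i) (L!j) = (if i = j then 1 else 0)"
    and ow: "\<And>i. i < 8 \<Longrightarrow> inner (L!i) w = 0"
  shows "w = 0"
proof -
  have dL: "distinct L"
  proof (subst distinct_conv_nth, intro allI impI)
    fix i j assume "i < length L" "j < length L" "i \<noteq> j"
    then show "L!i \<noteq> L!j" using on[of i j] on[of i i] len by auto
  qed
  let ?B = "set L"
  have cB: "card ?B = 8" using dL len by (simp add: distinct_card)
  have po: "pairwise orthogonal ?B"
    unfolding pairwise_def orthogonal_def
    by (metis dL distinct_Ex1 len on)
  have z: "0 \<notin> ?B"
    by (metis in_set_conv_nth inner_zero_left len on zero_neq_one)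
  have ind: "independent ?B" by (rule pairwise_orthogonal_independent[OF po z])
  have "dim (UNIV::oct set) \<le> card ?B" using cB by simp
  then have "UNIV \<subseteq> span ?B" using card_ge_dim_independent[OF subset_UNIV ind] by simp
  then have "w \<in> span ?B" by auto
  moreover have "\<And>y. y \<in> ?B \<Longrightarrow> orthogonal w y"
    by (metis in_set_conv_nth inner_commute len ow orthogonal_def)
  ultimately have "orthogonal w w" by (rule orthogonal_to_span)
  then show ?thesis by (simp add: orthogonal_self)
qed

lemma nth_LL: "i < 8 \<Longrightarrow> (map G [0..<4] @ map H [0..<4]) ! i = (if i < 4 then G i else H (i - 4))"
  by (simp add: nth_append)

lemma inner_perp: "snd x = (0,0) \<Longrightarrow> fst y = (0,0) \<Longrightarrow> inner x y = 0"
  by (cases x, cases y) auto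

definition EE :: "nat \<Rightarrow> oct" where
  "EE k = (if k = 0 then ((0,0),(1,0)) else if k = 1 then ((0,0),(\<i>,0)) else if k = 2 then ((0,0),(0,1)) else ((0,0),(0,\<i>)))"

lemma less8: "i < (8::nat) \<longleftrightarrow> i < 4 \<or> (4 \<le> i \<and> i - 4 < 4)" by auto

lemma orthogonal_zero:
  assumes F: "frame c a b" and A: "a \<in> Aset c" "b \<in> Aset c" "w \<in> Aset c"
    and h: "\<And>k. k < 4 \<Longrightarrow> hh c (fr a b k) w = 0"
  shows "w = 0"
proof -
  have I: "inner x y = Re (hh c x y)" for x y by (simp add: hh_Re)
  have O: "i < 4 \<Longrightarrow> j < 4 \<Longrightarrow> inner (fr a b i) (fr a b j) = (if i = j then 1 else 0)" for i j
    by (simp add: I fr_orth[OF F])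
  show ?thesis
  proof (cases c)
    case RH
    let ?L = "map (fr a b) [0..<4] @ map EE [0..<4]"
    have sA: "snd (fr a b k) = (0,0)" for k using fr_Aset[OF A(1,2)] RH Aset_RH by blast
    have sw: "snd w = (0,0)" using A(3) RH Aset_RH by blast
    have fE: "fst (EE k) = (0,0)" for k by (simp add: EE_def)
    have EE4: "k < 4 \<Longrightarrow> l < 4 \<Longrightarrow> inner (EE k) (EE l) = (if k = l then 1 else 0)" for k l
      unfolding less4 by (elim disjE; simp add: EE_def inner_complex_def)
    show ?thesis
    proof (rule orth8[of ?L])
      show "length ?L = 8" by simp
    next
      fix i j :: nat assume i: "i < 8" and j: "j < 8"
      show "inner (?L!i) (?L!j) = (if i = j then 1 else 0)"
      proof (cases "i < 4")
        case True note ti = this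
        show ?thesis
        proof (cases "j < 4")
          case True then show ?thesis using ti by (simp add: nth_LL i j O)
        next
          case False then show ?thesis using ti by (simp add: nth_LL i j inner_perp[OF sA fE])
        qed
      next
        case False note ti = this
        show ?thesis
        proof (cases "j < 4")
          case True then show ?thesis using ti
            by (simp add: nth_LL i j inner_commute[of "EE _"] inner_perp[OF sA fE])
        next
          case False
          then have k: "i-4 < 4" "j-4 < 4" "(i-4 = j-4) = (i = j)" using ti i j by auto
          show ?thesis using EE4[OF k(1,2)] k(3) ti False by (simp add: nth_LL i j)
        qed
      qed
    next
      fix i :: nat assume i: "i < 8"
      show "inner (?L!i) w = 0"
      proof (cases "i < 4")
        case True then show ?thesis by (simp add: nth_LL i I h)
      next
        case False then show ?thesis by (simp add: nth_LL i inner_commute[of "EE _"] inner_perp[OF sw fE])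
      qed
    qed
  next
    case CO
    let ?L = "map (fr a b) [0..<4] @ map (\<lambda>k. sm (fr a b k) \<i>) [0..<4]"
    have sci: "\<i> \<in> sc c" by (simp add: sc_def CO)
    show ?thesis
    proof (rule orth8[of ?L])
      show "length ?L = 8" by simp
    next
      fix i j :: nat assume i: "i < 8" and j: "j < 8"
      show "inner (?L!i) (?L!j) = (if i = j then 1 else 0)"
      proof (cases "i < 4")
        case True note ti = this
        show ?thesis
        proof (cases "j < 4")
          case True then show ?thesis using ti by (simp add: nth_LL i j O)
        next
          case False
          have j4: "j - 4 < 4" using j by arith
          show ?thesis using ti False fr_orth[OF F ti j4]
            by (simp add: nth_LL i j I hh_sm_right sci)
        qed
      next
        case False note ti = this
        show ?thesis
        proof (cases "j < 4")
          case True
          have i4: "i - 4 < 4" using i by arith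
          show ?thesis using ti True fr_orth[OF F i4 True]
            by (simp add: nth_LL i j I hh_sm_left sci)
        next
          case False
          then have k: "i-4 < 4" "j-4 < 4" "(i-4 = j-4) = (i = j)" using ti i j by auto
          show ?thesis using ti False fr_orth[OF F k(1,2)] k(3)
            by (simp add: nth_LL i j I hh_sm_left hh_sm_right sci)
        qed
      qed
    next
      fix i :: nat assume i: "i < 8"
      show "inner (?L!i) w = 0"
      proof (cases "i < 4")
        case True then show ?thesis by (simp add: nth_LL i I h)
      next
        case False
        have i4: "i - 4 < 4" using i by arith
        show ?thesis using False h[OF i4] by (simp add: nth_LL i I hh_sm_left sci)
      qed
    qed
  qed
qed

lemma hh_diff_right: "hh c x (y - z) = hh c x y - hh c x z"
proof -
  have "hh c x (y + - z) = hh c x y + hh c x (- z)" by (rule hh_add_right)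
  then show ?thesis by (simp add: hh_neg_right)
qed

lemma ex_Aset: "(\<And>k. g k \<in> Aset c) \<Longrightarrow> ex g \<alpha> \<in> Aset c"
  by (simp add: ex_def Aset_add Aset_sm)

lemma complete:
  assumes F: "frame c a b" and A: "a \<in> Aset c" "b \<in> Aset c" and z: "z \<in> Aset c"
  shows "z = ex (fr a b) (\<lambda>k. hh c (fr a b k) z)"
proof -
  let ?S = "ex (fr a b) (\<lambda>k. hh c (fr a b k) z)"
  have "z - ?S = 0"
  proof (rule orthogonal_zero[OF F A])
    show "z - ?S \<in> Aset c"
      using Aset_add[OF z Aset_sm[OF ex_Aset[OF fr_Aset[OF A]], where t = "-1"]] by (simp add: sm_minus)
    show "hh c (fr a b k) (z - ?S) = 0" if "k < 4" for k
      using hh_fr_ex[OF F that, of "\<lambda>k. hh c (fr a b k) z"] by (simp add: hh_diff_right hh_sc)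
  qed
  then show ?thesis by simp
qed

lemma pair:
  assumes G: "frame c a b" and F: "frame c u v" and ij: "i < 4" "j < 4" and pq: "p \<in> sc c" "q \<in> sc c"
  shows "phi c (fr a b) (fr u v) (omul (sm (fr a b i) p) (sm (fr a b j) q)) = omul (sm (fr u v i) p) (sm (fr u v j) q)"
proof -
  have k: "tk i j < 4" using tk_less[OF ij] .
  have e: "complex_of_real (te i j) * gam c i j p q \<in> sc c" by (simp add: sc_mult gam_sc pq)
  have "phi c (fr a b) (fr u v) (omul (sm (fr a b i) p) (sm (fr a b j) q))
      = phi c (fr a b) (fr u v) (sm (fr a b (tk i j)) (complex_of_real (te i j) * gam c i j p q))"
    by (simp add: fr_scal[OF G ij pq] fr_mul[OF G ij] sm_assoc)
  also have "\<dots> = sm (fr u v (tk i j)) (complex_of_real (te i j) * gam c i j p q)"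
    by (rule phi_basis[OF G k e])
  also have "\<dots> = omul (sm (fr u v i) p) (sm (fr u v j) q)"
    by (simp add: fr_scal[OF F ij pq] fr_mul[OF F ij] sm_assoc)
  finally show ?thesis .
qed

lemma phi_ex: assumes G: "frame c a b" and s: "\<And>k. \<alpha> k \<in> sc c"
  shows "phi c (fr a b) f (ex (fr a b) \<alpha>) = ex f \<alpha>"
  by (simp add: phi_def ex_def[of f] hh_fr_ex[OF G _ s])

lemma phi_mult:
  assumes G: "frame c a b" and F: "frame c u v" and A: "a \<in> Aset c" "b \<in> Aset c"
    and zw: "z \<in> Aset c" "w \<in> Aset c"
  shows "phi c (fr a b) (fr u v) (omul z w) = omul (phi c (fr a b) (fr u v) z) (phi c (fr a b) (fr u v) w)"
proof -
  define \<alpha> where "\<alpha> = (\<lambda>k. hh c (fr a b k) z)"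
  define \<beta> where "\<beta> = (\<lambda>k. hh c (fr a b k) w)"
  have sa: "\<And>k. \<alpha> k \<in> sc c" and sb: "\<And>k. \<beta> k \<in> sc c" by (simp_all add: \<alpha>_def \<beta>_def hh_sc)
  have z: "z = ex (fr a b) \<alpha>" unfolding \<alpha>_def by (rule complete[OF G A zw(1)])
  have w: "w = ex (fr a b) \<beta>" unfolding \<beta>_def by (rule complete[OF G A zw(2)])
  have "phi c (fr a b) (fr u v) (omul (ex (fr a b) \<alpha>) (ex (fr a b) \<beta>)) = omul (ex (fr u v) \<alpha>) (ex (fr u v) \<beta>)"
    unfolding ex_def by (simp add: omul_add_left omul_add_right phi_add pair[OF G F] sa sb)
  then show ?thesis unfolding z w by (simp add: phi_ex[OF G sa] phi_ex[OF G sb])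
qed

lemma phi_hh:
  assumes G: "frame c a b" and F: "frame c u v" and A: "a \<in> Aset c" "b \<in> Aset c"
    and zw: "z \<in> Aset c" "w \<in> Aset c"
  shows "hh c (phi c (fr a b) (fr u v) z) (phi c (fr a b) (fr u v) w) = hh c z w"
proof -
  define \<alpha> where "\<alpha> = (\<lambda>k. hh c (fr a b k) z)"
  define \<beta> where "\<beta> = (\<lambda>k. hh c (fr a b k) w)"
  have sa: "\<And>k. \<alpha> k \<in> sc c" and sb: "\<And>k. \<beta> k \<in> sc c" by (simp_all add: \<alpha>_def \<beta>_def hh_sc)
  have z: "z = ex (fr a b) \<alpha>" unfolding \<alpha>_def by (rule complete[OF G A zw(1)])
  have w: "w = ex (fr a b) \<beta>" unfolding \<beta>_def by (rule complete[OF G A zw(2)])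
  show ?thesis unfolding z w by (simp add: phi_ex[OF G sa] phi_ex[OF G sb] hh_ex[OF G sa sb] hh_ex[OF F sa sb])
qed

lemma phi_sharp:
  assumes G: "frame c a b" and F: "frame c u v" and A: "a \<in> Aset c" "b \<in> Aset c"
  shows "sharp c (phi c (fr a b) (fr u v))"
  unfolding sharp_def oadd_eq Fset_sc herm_hh
  by (auto simp: phi_add omul_cemb_right phi_sm phi_mult[OF G F A] phi_hh[OF G F A])

lemma cemb_eq_zero: "cemb s = 0 \<longleftrightarrow> s = 0" by (simp add: cemb_simp zero_prod_def)
lemma line_set_alt: "line_set c x u = {(sm x s, sm u s) | s. s \<in> sc c \<and> s \<noteq> 0}"
proof (intro set_eqI iffI)
  fix p assume "p \<in> line_set c x u"
  then obtain t where t: "p = (omul x t, omul u t)" "t \<in> Fset c" "t \<noteq> ozero" by (auto simp: line_set_def)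
  then obtain s where s: "t = cemb s" "s \<in> sc c" by (auto simp: Fset_sc)
  have "s \<noteq> 0" using t(3) s(1) by (auto simp: ozero_eq cemb_eq_zero)
  then show "p \<in> {(sm x s, sm u s) | s. s \<in> sc c \<and> s \<noteq> 0}" using t s by (auto simp: sm_def)
next
  fix p assume "p \<in> {(sm x s, sm u s) | s. s \<in> sc c \<and> s \<noteq> 0}"
  then obtain s where s: "p = (sm x s, sm u s)" "s \<in> sc c" "s \<noteq> 0" by auto
  have "cemb s \<in> Fset c" "cemb s \<noteq> ozero" using s by (auto simp: Fset_sc ozero_eq cemb_eq_zero)
  moreover have "p = (omul x (cemb s), omul u (cemb s))" using s(1) by (simp add: sm_def)
  ultimately show "p \<in> line_set c x u" unfolding line_set_def by blast
qed
lemma point_set_alt: "point_set c x = {sm x s | s. s \<in> sc c}"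
proof (intro set_eqI iffI)
  fix p assume "p \<in> point_set c x"
  then obtain t where t: "p = omul x t" "t \<in> Fset c" by (auto simp: point_set_def)
  then obtain s where s: "t = cemb s" "s \<in> sc c" by (auto simp: Fset_sc)
  then show "p \<in> {sm x s | s. s \<in> sc c}" using t s by (auto simp: sm_def)
next
  fix p assume "p \<in> {sm x s | s. s \<in> sc c}"
  then obtain s where s: "p = sm x s" "s \<in> sc c" by auto
  have "cemb s \<in> Fset c" using s by (auto simp: Fset_sc)
  moreover have "p = omul x (cemb s)" using s(1) by (simp add: sm_def)
  ultimately show "p \<in> point_set c x" unfolding point_set_def by blast
qed

lemma sm_cancel: "sm z t = sm w t \<Longrightarrow> t \<noteq> 0 \<Longrightarrow> z = w"
proof -
  assume a: "sm z t = sm w t" "t \<noteq> 0"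
  then have "sm (sm z t) (inverse t) = sm (sm w t) (inverse t)" by simp
  then show ?thesis using a(2) by (simp add: sm_assoc)
qed

lemma sc_div: "s \<in> sc c \<Longrightarrow> t \<in> sc c \<Longrightarrow> s * inverse t \<in> sc c"
  by (simp add: sc_mult sc_inverse)

lemma LS1: assumes "line_set c x u = line_set c x' u'"
  shows "\<exists>t \<in> sc c. t \<noteq> 0 \<and> x' = sm x t \<and> u' = sm u t"
proof -
  have "(x', u') \<in> line_set c x' u'" unfolding line_set_alt
    by (rule CollectI, rule exI[of _ 1]) simp
  then have "(x', u') \<in> line_set c x u" using assms by simp
  then show ?thesis unfolding line_set_alt by auto
qed

lemma LS2: assumes t: "t \<in> sc c" "t \<noteq> 0"
  shows "line_set c (sm x t) (sm u t) = line_set c x u"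
proof
  show "line_set c (sm x t) (sm u t) \<subseteq> line_set c x u"
    unfolding line_set_alt using t by (auto simp: sm_assoc sc_mult)
  show "line_set c x u \<subseteq> line_set c (sm x t) (sm u t)"
  proof
    fix p assume "p \<in> line_set c x u"
    then obtain s where s: "s \<in> sc c" "s \<noteq> 0" "p = (sm x s, sm u s)" unfolding line_set_alt by auto
    have e: "t * (inverse t * s) = s" using t by (simp add: field_simps)
    have "p = (sm (sm x t) (inverse t * s), sm (sm u t) (inverse t * s))"
      unfolding s(3) by (simp only: sm_assoc e)
    moreover have "inverse t * s \<in> sc c" "inverse t * s \<noteq> 0" using s t by (auto simp: sc_mult sc_inverse)
    ultimately show "p \<in> line_set c (sm x t) (sm u t)" unfolding line_set_alt by blast
  qed
qed

lemma PS2: assumes t: "t \<in> sc c" "t \<noteq> 0"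
  shows "point_set c (sm x t) = point_set c x"
proof
  show "point_set c (sm x t) \<subseteq> point_set c x"
    unfolding point_set_alt using t by (auto simp: sm_assoc sc_mult)
  show "point_set c x \<subseteq> point_set c (sm x t)"
  proof
    fix p assume "p \<in> point_set c x"
    then obtain s where s: "s \<in> sc c" "p = sm x s" unfolding point_set_alt by auto
    have e: "t * (inverse t * s) = s" using t by (simp add: field_simps)
    have "p = sm (sm x t) (inverse t * s)" unfolding s(2) by (simp only: sm_assoc e)
    moreover have "inverse t * s \<in> sc c" using s t by (auto simp: sc_mult sc_inverse)
    ultimately show "p \<in> point_set c (sm x t)" unfolding point_set_alt by blast
  qed
qed

context fixes c \<psi> assumes sh: "sharp c \<psi>"
begin
lemma sh_add: "x \<in> Aset c \<Longrightarrow> y \<in> Aset c \<Longrightarrow> \<psi> (x + y) = \<psi> x + \<psi> y"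
  using sh by (simp add: sharp_def oadd_eq)
lemma sh_sm: "x \<in> Aset c \<Longrightarrow> t \<in> sc c \<Longrightarrow> \<psi> (sm x t) = sm (\<psi> x) t"
  using sh by (auto simp: sharp_def Fset_sc sm_def)
lemma sh_mul: "x \<in> Aset c \<Longrightarrow> y \<in> Aset c \<Longrightarrow> \<psi> (omul x y) = omul (\<psi> x) (\<psi> y)"
  using sh by (simp add: sharp_def)
lemma sh_hh: "x \<in> Aset c \<Longrightarrow> y \<in> Aset c \<Longrightarrow> hh c (\<psi> x) (\<psi> y) = hh c x y"
  using sh by (simp add: sharp_def herm_hh cemb_inj)
lemma sh_neg: "x \<in> Aset c \<Longrightarrow> \<psi> (- x) = - \<psi> x"
  using sh_sm[of x "-1"] by (simp add: sm_minus sc_minus)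
lemma sh_diff: "x \<in> Aset c \<Longrightarrow> y \<in> Aset c \<Longrightarrow> \<psi> (x - y) = \<psi> x - \<psi> y"
proof -
  assume a: "x \<in> Aset c" "y \<in> Aset c"
  have "- y \<in> Aset c" using Aset_sm[OF a(2), where t="-1"] by (simp add: sm_minus)
  have "\<psi> (x + - y) = \<psi> x + - \<psi> y" using sh_add[OF a(1) \<open>- y \<in> Aset c\<close>] sh_neg[OF a(2)] by simp
  then show ?thesis by (simp only: diff_conv_add_uminus)
qed
lemma sh_ex: "(\<And>k. g k \<in> Aset c) \<Longrightarrow> (\<And>k. \<alpha> k \<in> sc c) \<Longrightarrow> \<psi> (ex g \<alpha>) = ex (\<lambda>k. \<psi> (g k)) \<alpha>"
  unfolding ex_def by (simp add: sh_add sh_sm Aset_add Aset_sm)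
end

lemma Aset_diff: "x \<in> Aset c \<Longrightarrow> y \<in> Aset c \<Longrightarrow> x - y \<in> Aset c"
proof -
  assume a: "x \<in> Aset c" "y \<in> Aset c"
  have "- y \<in> Aset c" using Aset_sm[OF a(2), where t="-1"] by (simp add: sm_minus)
  from Aset_add[OF a(1) this] show ?thesis by simp
qed
lemma pure_diff: "pure c x \<Longrightarrow> pure c y \<Longrightarrow> pure c (x - y)"
  by (simp add: pure_def hh_diff_right)
lemma hh_diff_left: "hh c (y - z) x = hh c y x - hh c z x"
proof -
  have "hh c (y - z) x = cnj (hh c x (y - z))" by (rule hh_sym)
  also have "\<dots> = cnj (hh c x y) - cnj (hh c x z)" by (simp add: hh_diff_right)
  also have "\<dots> = hh c y x - hh c z x" by (simp add: hh_sym[of c x])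
  finally show ?thesis .
qed

lemma GS:
  assumes u1: "hh c x1 x1 = 1" and h: "h = hh c x1 y"
  shows "hh c (y - sm x1 h) (y - sm x1 h) = hh c y y - cnj h * h"
    and "hh c x1 (y - sm x1 h) = 0"
proof -
  have hs: "h \<in> sc c" unfolding h by (rule hh_sc)
  have hy: "hh c y x1 = cnj h" unfolding h by (rule hh_sym)
  have "hh c x1 (y - sm x1 h) = hh c x1 y - hh c x1 x1 * h" by (simp only: hh_diff_right hh_sm_right[OF hs])
  then show o: "hh c x1 (y - sm x1 h) = 0" using u1 h by simp
  have "hh c (y - sm x1 h) (y - sm x1 h) = hh c y (y - sm x1 h) - cnj h * hh c x1 (y - sm x1 h)"
    by (simp only: hh_diff_left hh_sm_left[OF hs])
  also have "\<dots> = hh c y (y - sm x1 h)" by (simp only: o mult_zero_right diff_zero)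
  also have "\<dots> = hh c y y - cnj h * h"
    by (simp only: hh_diff_right hh_sm_right[OF hs] hy)
  finally show "hh c (y - sm x1 h) (y - sm x1 h) = hh c y y - cnj h * h" .
qed

lemma hh_self_norm: "hh c x x = complex_of_real (norm x ^ 2)"
  by (simp add: hh_self power2_norm_eq_inner)

lemma unit_scale:
  assumes "x \<noteq> 0"
  shows "hh c (sm x (complex_of_real (1 / norm x))) (sm x (complex_of_real (1 / norm x))) = 1"
proof -
  have "hh c (sm x (complex_of_real (1 / norm x))) (sm x (complex_of_real (1 / norm x)))
      = cnj (complex_of_real (1 / norm x)) * (hh c x x * complex_of_real (1 / norm x))"
    by (simp only: hh_sm_left[OF sc_of_real] hh_sm_right[OF sc_of_real] mult.assoc)
  also have "\<dots> = complex_of_real ((1 / norm x) * (norm x ^ 2 * (1 / norm x)))"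
    by (simp only: hh_self_norm complex_cnj_complex_of_real of_real_mult)
  also have "(1 / norm x) * (norm x ^ 2 * (1 / norm x)) = 1" using assms by (simp add: power2_eq_square)
  finally show ?thesis by simp
qed

lemma sm_scale_back:
  assumes "x \<noteq> 0"
  shows "sm (sm x (complex_of_real (1 / norm x))) (complex_of_real (norm x)) = x"
  using assms by (simp add: sm_assoc flip: of_real_mult)

lemma lp_facts:
  assumes "line_params c x u"
  shows "x \<in> Aset c" "pure c x" "pure c u" "norm x = norm u" "x \<noteq> 0" "u \<noteq> 0"
  using assms by (auto simp: line_params_def Pu_iff onorm_eq)

theorem construct:
  assumes LP1: "line_params c x u" and LP2: "line_params c y v"
    and dist: "line_set c x u \<noteq> line_set c y v" and H: "hh c x y = hh c u v"
  shows "\<exists>a b a' b'. frame c a b \<and> a \<in> Aset c \<and> b \<in> Aset c \<and> frame c a' b' \<and>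
     phi c (fr a b) (fr a' b') x = u \<and> phi c (fr a b) (fr a' b') y = v \<and>
     (\<forall>\<psi>. sharp c \<psi> \<and> \<psi> x = u \<and> \<psi> y = v \<longrightarrow> (\<forall>z\<in>Aset c. \<psi> z = phi c (fr a b) (fr a' b') z))"
proof -
  note X = lp_facts[OF LP1] and Y = lp_facts[OF LP2]
  define n where "n = norm x"
  define ni where "ni = complex_of_real (1 / n)"
  have nu: "n = norm u" using X(4) n_def by simp
  have ni_sc: "ni \<in> sc c" unfolding ni_def by (rule sc_of_real)
  define x1 where "x1 = sm x ni"
  define u1 where "u1 = sm u ni"
  have x1u: "hh c x1 x1 = 1" unfolding x1_def ni_def n_def by (rule unit_scale[OF X(5)])
  have u1u: "hh c u1 u1 = 1" unfolding u1_def ni_def nu by (rule unit_scale[OF X(6)])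
  have xb: "sm x1 (complex_of_real n) = x" unfolding x1_def ni_def n_def by (rule sm_scale_back[OF X(5)])
  have ub: "sm u1 (complex_of_real n) = u" unfolding u1_def ni_def nu by (rule sm_scale_back[OF X(6)])
  define h where "h = hh c x1 y"
  have h2: "h = hh c u1 v" unfolding h_def x1_def u1_def by (simp add: hh_sm_left ni_sc H)
  have hs: "h \<in> sc c" unfolding h_def by (rule hh_sc)
  define y2 where "y2 = y - sm x1 h"
  define v2 where "v2 = v - sm u1 h"
  have y2y2: "hh c y2 y2 = hh c y y - cnj h * h" unfolding y2_def by (rule GS(1)[OF x1u h_def])
  have v2v2: "hh c v2 v2 = hh c v v - cnj h * h" unfolding v2_def by (rule GS(1)[OF u1u h2])
  have x1y2: "hh c x1 y2 = 0" unfolding y2_def by (rule GS(2)[OF x1u h_def])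
  have u1v2: "hh c u1 v2 = 0" unfolding v2_def by (rule GS(2)[OF u1u h2])
  have yyvv: "hh c y y = hh c v v" using Y(4) by (simp add: hh_self_norm)
  have eq22: "hh c y2 y2 = hh c v2 v2" using y2y2 v2v2 yyvv by simp
  have x1A: "x1 \<in> Aset c" unfolding x1_def by (rule Aset_sm[OF X(1)])
  have y2A: "y2 \<in> Aset c" unfolding y2_def by (rule Aset_diff[OF Y(1) Aset_sm[OF x1A]])
  have px1: "pure c x1" unfolding x1_def by (rule pure_sm[OF X(2) ni_sc])
  have pu1: "pure c u1" unfolding u1_def by (rule pure_sm[OF X(3) ni_sc])
  have py2: "pure c y2" unfolding y2_def by (rule pure_diff[OF Y(2) pure_sm[OF px1 hs]])
  have pv2: "pure c v2" unfolding v2_def by (rule pure_diff[OF Y(3) pure_sm[OF pu1 hs]])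
  have yrec: "y = y2 + sm x1 h" unfolding y2_def by simp
  have vrec: "v = v2 + sm u1 h" unfolding v2_def by simp
  have y20: "y2 \<noteq> 0"
  proof
    assume y20: "y2 = 0"
    then have "hh c v2 v2 = 0" using eq22 by simp
    then have "v2 = 0" by (simp only: hh_self_zero)
    then have yy: "y = sm x (ni * h)" and vv: "v = sm u (ni * h)"
      using y20 yrec vrec by (simp_all add: x1_def u1_def sm_assoc)
    have k0: "ni * h \<noteq> 0" using yy Y(5) by auto
    have "line_set c y v = line_set c x u" unfolding yy vv
      by (rule LS2[OF sc_mult[OF ni_sc hs] k0])
    then show False using dist by simp
  qed
  define m where "m = norm y2"
  define mi where "mi = complex_of_real (1 / m)"
  have mi_sc: "mi \<in> sc c" unfolding mi_def by (rule sc_of_real)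
  have v20: "v2 \<noteq> 0" using y20 eq22 by (metis hh_self_zero)
  have "norm y2 ^ 2 = norm v2 ^ 2" using eq22 unfolding hh_self_norm of_real_eq_iff .
  then have mv: "m = norm v2" unfolding m_def by (simp add: power2_eq_iff_nonneg)
  define y1 where "y1 = sm y2 mi"
  define v1 where "v1 = sm v2 mi"
  have y1u: "hh c y1 y1 = 1" unfolding y1_def mi_def m_def by (rule unit_scale[OF y20])
  have v1u: "hh c v1 v1 = 1" unfolding v1_def mi_def mv by (rule unit_scale[OF v20])
  have yb: "sm y1 (complex_of_real m) = y2" unfolding y1_def mi_def m_def by (rule sm_scale_back[OF y20])
  have vb: "sm v1 (complex_of_real m) = v2" unfolding v1_def mi_def mv by (rule sm_scale_back[OF v20])
  have G: "frame c x1 y1" unfolding frame_def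
    using px1 pure_sm[OF py2 mi_sc] x1u y1u x1y2 by (simp add: y1_def hh_sm_right mi_sc)
  have F: "frame c u1 v1" unfolding frame_def
    using pu1 pure_sm[OF pv2 mi_sc] u1u v1u u1v2 by (simp add: v1_def hh_sm_right mi_sc)
  have y1A: "y1 \<in> Aset c" unfolding y1_def by (rule Aset_sm[OF y2A])
  let ?phi = "phi c (fr x1 y1) (fr u1 v1)"
  have f1: "fr x1 y1 1 = x1" "fr u1 v1 1 = u1" "fr x1 y1 2 = y1" "fr u1 v1 2 = v1" by (simp_all add: fr_def)
  have phix: "?phi x = u"
  proof -
    have "?phi (sm (fr x1 y1 1) (complex_of_real n)) = sm (fr u1 v1 1) (complex_of_real n)"
      by (rule phi_basis[OF G]) simp_all
    then show ?thesis using xb ub by (simp add: fr_def)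
  qed
  have phiy: "?phi y = v"
  proof -
    have "?phi y = ?phi (sm (fr x1 y1 2) (complex_of_real m)) + ?phi (sm (fr x1 y1 1) h)"
      using yrec yb f1 by (simp add: phi_add)
    also have "\<dots> = sm v1 (complex_of_real m) + sm u1 h"
      using phi_basis[OF G, of 2 "complex_of_real m" "fr u1 v1"] phi_basis[OF G, of 1 h "fr u1 v1"] hs f1 by simp
    also have "\<dots> = v" using vb vrec by simp
    finally show ?thesis .
  qed
  have uniq: "\<forall>\<psi>. sharp c \<psi> \<and> \<psi> x = u \<and> \<psi> y = v \<longrightarrow> (\<forall>z\<in>Aset c. \<psi> z = ?phi z)"
  proof (intro allI impI ballI)
    fix \<psi> z assume a: "sharp c \<psi> \<and> \<psi> x = u \<and> \<psi> y = v" and z: "z \<in> Aset c"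
    then have sh: "sharp c \<psi>" and px: "\<psi> x = u" and py: "\<psi> y = v" by auto
    have p1: "\<psi> x1 = u1" unfolding x1_def u1_def using sh_sm[OF sh X(1) ni_sc] px by simp
    have p2': "\<psi> y2 = v2" unfolding y2_def v2_def
      using sh_diff[OF sh Y(1) Aset_sm[OF x1A]] sh_sm[OF sh x1A hs] py p1 by simp
    have p2: "\<psi> y1 = v1" unfolding y1_def v1_def using sh_sm[OF sh y2A mi_sc] p2' by simp
    have p3: "\<psi> (omul x1 y1) = omul u1 v1" using sh_mul[OF sh x1A y1A] p1 p2 by simp
    have p0: "\<psi> (cemb 1) = cemb 1"
    proof -
      have "cemb 1 = - omul x1 x1" using m_aa[OF G] by simp
      then have "\<psi> (cemb 1) = - omul (\<psi> x1) (\<psi> x1)"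
        using sh_neg[OF sh Aset_mul[OF x1A x1A]] sh_mul[OF sh x1A x1A] by simp
      then show ?thesis using m_aa[OF F] p1 by simp
    qed
    have pk: "\<psi> (fr x1 y1 k) = fr u1 v1 k" for k using p0 p1 p2 p3 by (simp add: fr_def)
    define \<alpha> where "\<alpha> = (\<lambda>k. hh c (fr x1 y1 k) z)"
    have sa: "\<And>k. \<alpha> k \<in> sc c" by (simp add: \<alpha>_def hh_sc)
    have zz: "z = ex (fr x1 y1) \<alpha>" unfolding \<alpha>_def by (rule complete[OF G x1A y1A z])
    have "\<psi> z = ex (fr u1 v1) \<alpha>"
      unfolding zz by (simp add: sh_ex[OF sh fr_Aset[OF x1A y1A] sa] pk)
    also have "\<dots> = ?phi z" unfolding zz by (rule phi_ex[OF G sa, symmetric])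
    finally show "\<psi> z = ?phi z" .
  qed
  show ?thesis using G F x1A y1A phix phiy uniq by blast
qed

lemma PS1: "p \<in> point_set c p' \<Longrightarrow> \<exists>s\<in>sc c. p = sm p' s"
  unfolding point_set_alt by auto
lemma self_in_ps: "p \<in> point_set c p"
  unfolding point_set_alt by (rule CollectI, rule exI[of _ 1]) simp

lemma perp_unique:
  assumes pA: "p \<in> Aset c" "pure c p" "p \<noteq> 0" and qA: "q \<in> Aset c" "pure c q" "q \<noteq> 0"
    and pq: "point_set c p \<noteq> point_set c q"
    and xA: "x \<in> Aset c" "pure c x" "x \<noteq> 0" and x'A: "x' \<in> Aset c" "pure c x'"
    and o: "hh c x p = 0" "hh c x q = 0" "hh c x' p = 0" "hh c x' q = 0"
  shows "\<exists>s\<in>sc c. x' = sm x s"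
proof -
  define ni where "ni = complex_of_real (1 / norm p)"
  have ni_sc: "ni \<in> sc c" unfolding ni_def by (rule sc_of_real)
  define p1 where "p1 = sm p ni"
  have p1u: "hh c p1 p1 = 1" unfolding p1_def ni_def by (rule unit_scale[OF pA(3)])
  define h where "h = hh c p1 q"
  have hs: "h \<in> sc c" unfolding h_def by (rule hh_sc)
  define q2 where "q2 = q - sm p1 h"
  have p1q2: "hh c p1 q2 = 0" unfolding q2_def by (rule GS(2)[OF p1u h_def])
  have p1A: "p1 \<in> Aset c" unfolding p1_def by (rule Aset_sm[OF pA(1)])
  have q2A: "q2 \<in> Aset c" unfolding q2_def by (rule Aset_diff[OF qA(1) Aset_sm[OF p1A]])
  have pp1: "pure c p1" unfolding p1_def by (rule pure_sm[OF pA(2) ni_sc])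
  have pq2: "pure c q2" unfolding q2_def by (rule pure_diff[OF qA(2) pure_sm[OF pp1 hs]])
  have q20: "q2 \<noteq> 0"
  proof
    assume "q2 = 0"
    then have qq: "q = sm p (ni * h)" unfolding q2_def p1_def by (simp add: sm_assoc)
    have k0: "ni * h \<noteq> 0" using qq qA(3) by auto
    have "point_set c q = point_set c p" unfolding qq by (rule PS2[OF sc_mult[OF ni_sc hs] k0])
    then show False using pq by simp
  qed
  define mi where "mi = complex_of_real (1 / norm q2)"
  have mi_sc: "mi \<in> sc c" unfolding mi_def by (rule sc_of_real)
  define q1 where "q1 = sm q2 mi"
  have q1u: "hh c q1 q1 = 1" unfolding q1_def mi_def by (rule unit_scale[OF q20])
  have q1A: "q1 \<in> Aset c" unfolding q1_def by (rule Aset_sm[OF q2A])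
  have G: "frame c p1 q1" unfolding frame_def
    using pp1 pure_sm[OF pq2 mi_sc] p1u q1u p1q2 by (simp add: q1_def hh_sm_right mi_sc)
  have rep: "w = sm (omul p1 q1) (hh c (omul p1 q1) w)"
    if w: "w \<in> Aset c" "pure c w" "hh c w p = 0" "hh c w q = 0" for w
  proof -
    have wp1: "hh c w p1 = 0" unfolding p1_def by (simp add: hh_sm_right ni_sc w(3))
    have wq2: "hh c w q2 = 0" unfolding q2_def by (simp add: hh_diff_right hh_sm_right hs wp1 w(4))
    have wq1: "hh c w q1 = 0" unfolding q1_def by (simp add: hh_sm_right mi_sc wq2)
    have a0: "hh c (cemb 1) w = 0" using w(2) by (simp add: pure_def)
    have a1: "hh c p1 w = 0" using hh_sym[of c p1 w] wp1 by simp
    have a2: "hh c q1 w = 0" using hh_sym[of c q1 w] wq1 by simp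
    have "w = ex (fr p1 q1) (\<lambda>k. hh c (fr p1 q1 k) w)" by (rule complete[OF G p1A q1A w(1)])
    then show ?thesis by (simp add: ex_def fr_def a0 a1 a2)
  qed
  have hxs: "hh c x p = 0" "hh c x q = 0" using o by auto
  have ex1: "x = sm (omul p1 q1) (hh c (omul p1 q1) x)" by (rule rep[OF xA(1,2) o(1,2)])
  have ex2: "x' = sm (omul p1 q1) (hh c (omul p1 q1) x')" by (rule rep[OF x'A(1,2) o(3,4)])
  define a where "a = hh c (omul p1 q1) x"
  define b where "b = hh c (omul p1 q1) x'"
  have a0: "a \<noteq> 0" using ex1 xA(3) a_def by auto
  have "sm x (inverse a * b) = sm (omul p1 q1) (a * (inverse a * b))"
    using ex1 a_def by (metis sm_assoc)
  also have "a * (inverse a * b) = b" using a0 by (simp add: field_simps)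
  finally have "x' = sm x (inverse a * b)" using ex2 b_def by simp
  moreover have "inverse a * b \<in> sc c" unfolding a_def b_def by (simp add: sc_mult sc_inverse hh_sc)
  ultimately show ?thesis by blast
qed

lemma herm_zero: "herm c x y = ozero \<longleftrightarrow> hh c x y = 0"
  by (simp add: herm_hh ozero_eq cemb_eq_zero)

lemma inc_unpack:
  assumes "inc_point_line c P L" "line_params c x u" "L = line_set c x u"
  shows "\<exists>p. p \<in> Aset c \<and> pure c p \<and> p \<noteq> 0 \<and> P = point_set c p \<and> hh c x p = 0"
proof -
  obtain x0 u0 y where a: "line_params c x0 u0" "L = line_set c x0 u0" "y \<in> Pu c (Aset c)" "y \<noteq> ozero"
    "P = point_set c y" "herm c x0 y = ozero"
    using assms(1) unfolding inc_point_line_def by blast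
  obtain t where t: "t \<in> sc c" "t \<noteq> 0" "x = sm x0 t" "u = sm u0 t"
    using LS1[of c x0 u0 x u] a(2) assms(3) by auto
  have "hh c x y = 0" using a(6) t by (simp add: herm_zero hh_sm_left)
  moreover have "y \<in> Aset c" "pure c y" "y \<noteq> 0" using a(3,4) by (auto simp: Pu_iff ozero_eq)
  ultimately show ?thesis using a(5) by blast
qed

lemma inc_pack:
  assumes "line_params c x u" "L = line_set c x u" "r \<in> Aset c" "pure c r" "r \<noteq> 0" "R = point_set c r"
    "hh c x r = 0"
  shows "inc_point_line c R L"
proof -
  have "r \<in> Pu c (Aset c)" "r \<noteq> ozero" "herm c x r = ozero" using assms by (auto simp: Pu_iff ozero_eq herm_hh cemb_zero)
  then show ?thesis unfolding inc_point_line_def using assms(1,2,6) by blast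
qed

lemma part2_dir:
  assumes L: "is_line c L" and M: "is_line c M" and PQ: "P \<noteq> Q"
    and i: "inc_point_line c P L" "inc_point_line c Q L" "inc_point_line c P M" "inc_point_line c Q M"
    and R: "inc_point_line c R L"
  shows "inc_point_line c R M"
proof -
  obtain xL uL where l: "line_params c xL uL" "L = line_set c xL uL" using L by (auto simp: is_line_def)
  obtain xM uM where m: "line_params c xM uM" "M = line_set c xM uM" using M by (auto simp: is_line_def)
  obtain p where p: "p \<in> Aset c" "pure c p" "p \<noteq> 0" "P = point_set c p" "hh c xL p = 0"
    using inc_unpack[OF i(1) l] by blast
  obtain q where q: "q \<in> Aset c" "pure c q" "q \<noteq> 0" "Q = point_set c q" "hh c xL q = 0"
    using inc_unpack[OF i(2) l] by blast
  obtain p' where p': "P = point_set c p'" "hh c xM p' = 0"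
    using inc_unpack[OF i(3) m] by blast
  obtain q' where q': "Q = point_set c q'" "hh c xM q' = 0"
    using inc_unpack[OF i(4) m] by blast
  obtain r where r: "r \<in> Aset c" "pure c r" "r \<noteq> 0" "R = point_set c r" "hh c xL r = 0"
    using inc_unpack[OF R l] by blast
  obtain s1 where s1: "s1 \<in> sc c" "p = sm p' s1" using PS1[of p c p'] self_in_ps[of p c] p(4) p'(1) by auto
  obtain s2 where s2: "s2 \<in> sc c" "q = sm q' s2" using PS1[of q c q'] self_in_ps[of q c] q(4) q'(1) by auto
  have mp: "hh c xM p = 0" using s1 p'(2) by (simp add: hh_sm_right)
  have mq: "hh c xM q = 0" using s2 q'(2) by (simp add: hh_sm_right)
  note XL = lp_facts[OF l(1)] and XM = lp_facts[OF m(1)]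
  obtain s where s: "s \<in> sc c" "xM = sm xL s"
    using perp_unique[OF p(1,2,3) q(1,2,3) _ XL(1,2,5) XM(1,2) p(5) q(5) mp mq] PQ p(4) q(4) by auto
  have "hh c xM r = 0" using s r(5) by (simp add: hh_sm_left)
  then show ?thesis by (rule inc_pack[OF m r(1,2,3,4)])
qed

lemma inc_plane_eval:
  assumes sh: "sharp c \<psi>" and lp: "line_params c x u" and inc: "inc_line_plane c (line_set c x u) \<psi>"
  shows "\<psi> x = u"
proof -
  obtain x' u' where a: "line_params c x' u'" "line_set c x' u' = line_set c x u" "\<psi> x' = u'"
    using inc unfolding inc_line_plane_def by metis
  obtain t where t: "t \<in> sc c" "t \<noteq> 0" "x' = sm x t" "u' = sm u t"
    using LS1[of c x u x' u'] a(2) by auto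
  have "sm (\<psi> x) t = sm u t" using sh_sm[OF sh lp_facts(1)[OF lp] t(1)] a(3) t by simp
  then show ?thesis using sm_cancel t(2) by blast
qed

lemma inc_plane_intro: "line_params c x u \<Longrightarrow> \<phi> x = u \<Longrightarrow> inc_line_plane c (line_set c x u) \<phi>"
  unfolding inc_line_plane_def by blast

theorem mainTheorem2:
  fixes c :: pair_case
  shows
  "(\<forall>x u y v. line_params c x u \<and> line_params c y v \<and> line_set c x u \<noteq> line_set c y v \<longrightarrow>
      ((\<exists>\<phi>. sharp c \<phi> \<and> inc_line_plane c (line_set c x u) \<phi> \<and> inc_line_plane c (line_set c y v) \<phi>)
         \<longleftrightarrow> herm c x y = herm c u v) \<and>
      (herm c x y = herm c u v \<longrightarrow>
         (\<exists>\<phi>. sharp c \<phi> \<and> \<phi> x = u \<and> \<phi> y = v \<and>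
            (\<forall>\<psi>. sharp c \<psi> \<and> \<psi> x = u \<and> \<psi> y = v \<longrightarrow> (\<forall>z \<in> Aset c. \<psi> z = \<phi> z)) \<and>
            (\<forall>\<psi>. sharp c \<psi> \<and> inc_line_plane c (line_set c x u) \<psi> \<and> inc_line_plane c (line_set c y v) \<psi>
                 \<longrightarrow> (\<forall>z \<in> Aset c. \<psi> z = \<phi> z))))) \<and>
   (\<forall>L M P Q. is_line c L \<and> is_line c M \<and> is_point c P \<and> is_point c Q \<and> P \<noteq> Q \<and>
      inc_point_line c P L \<and> inc_point_line c Q L \<and> inc_point_line c P M \<and> inc_point_line c Q M \<longrightarrow>
      (\<forall>R. is_point c R \<longrightarrow> (inc_point_line c R L \<longleftrightarrow> inc_point_line c R M)))"
proof (intro conjI allI impI)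
  fix x u y v
  assume a: "line_params c x u \<and> line_params c y v \<and> line_set c x u \<noteq> line_set c y v"
  then have lp1: "line_params c x u" and lp2: "line_params c y v" and d: "line_set c x u \<noteq> line_set c y v" by auto
  have fwd: "herm c x y = herm c u v" if "sharp c \<psi>" "inc_line_plane c (line_set c x u) \<psi>"
    "inc_line_plane c (line_set c y v) \<psi>" for \<psi>
  proof -
    have "\<psi> x = u" "\<psi> y = v" using inc_plane_eval[OF that(1) lp1 that(2)] inc_plane_eval[OF that(1) lp2 that(3)] by auto
    then show ?thesis using sh_hh[OF that(1) lp_facts(1)[OF lp1] lp_facts(1)[OF lp2]] by (simp add: herm_hh)
  qed
  have bwd: "\<exists>\<phi>. sharp c \<phi> \<and> \<phi> x = u \<and> \<phi> y = v \<and>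
            (\<forall>\<psi>. sharp c \<psi> \<and> \<psi> x = u \<and> \<psi> y = v \<longrightarrow> (\<forall>z \<in> Aset c. \<psi> z = \<phi> z)) \<and>
            (\<forall>\<psi>. sharp c \<psi> \<and> inc_line_plane c (line_set c x u) \<psi> \<and> inc_line_plane c (line_set c y v) \<psi>
                 \<longrightarrow> (\<forall>z \<in> Aset c. \<psi> z = \<phi> z))" if H: "herm c x y = herm c u v"
  proof -
    have "hh c x y = hh c u v" using H by (simp add: herm_hh cemb_inj)
    then obtain a b a' b' where C: "frame c a b" "a \<in> Aset c" "b \<in> Aset c" "frame c a' b'"
      "phi c (fr a b) (fr a' b') x = u" "phi c (fr a b) (fr a' b') y = v"
      "\<forall>\<psi>. sharp c \<psi> \<and> \<psi> x = u \<and> \<psi> y = v \<longrightarrow> (\<forall>z\<in>Aset c. \<psi> z = phi c (fr a b) (fr a' b') z)"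
      using construct[OF lp1 lp2 d] by blast
    have S: "sharp c (phi c (fr a b) (fr a' b'))" by (rule phi_sharp[OF C(1,4,2,3)])
    show ?thesis
    proof (rule exI[of _ "phi c (fr a b) (fr a' b')"], intro conjI allI impI)
      show "sharp c (phi c (fr a b) (fr a' b'))" by (rule S)
      show "phi c (fr a b) (fr a' b') x = u" "phi c (fr a b) (fr a' b') y = v" by (rule C(5), rule C(6))
      show "\<forall>z\<in>Aset c. \<psi> z = phi c (fr a b) (fr a' b') z" if "sharp c \<psi> \<and> \<psi> x = u \<and> \<psi> y = v" for \<psi>
        using C(7) that by blast
      show "\<forall>z\<in>Aset c. \<psi> z = phi c (fr a b) (fr a' b') z"
        if "sharp c \<psi> \<and> inc_line_plane c (line_set c x u) \<psi> \<and> inc_line_plane c (line_set c y v) \<psi>" for \<psi>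
      proof -
        have "\<psi> x = u" "\<psi> y = v" using that inc_plane_eval[OF _ lp1] inc_plane_eval[OF _ lp2] by auto
        then show ?thesis using C(7) that by blast
      qed
    qed
  qed
  show "(\<exists>\<phi>. sharp c \<phi> \<and> inc_line_plane c (line_set c x u) \<phi> \<and> inc_line_plane c (line_set c y v) \<phi>)
         \<longleftrightarrow> herm c x y = herm c u v"
  proof
    assume "\<exists>\<phi>. sharp c \<phi> \<and> inc_line_plane c (line_set c x u) \<phi> \<and> inc_line_plane c (line_set c y v) \<phi>"
    then show "herm c x y = herm c u v" using fwd by blast
  next
    assume "herm c x y = herm c u v"
    then obtain \<phi> where "sharp c \<phi>" "\<phi> x = u" "\<phi> y = v" using bwd by blast
    then show "\<exists>\<phi>. sharp c \<phi> \<and> inc_line_plane c (line_set c x u) \<phi> \<and> inc_line_plane c (line_set c y v) \<phi>"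
      using inc_plane_intro[OF lp1] inc_plane_intro[OF lp2] by blast
  qed
  show "herm c x y = herm c u v \<Longrightarrow> \<exists>\<phi>. sharp c \<phi> \<and> \<phi> x = u \<and> \<phi> y = v \<and>
            (\<forall>\<psi>. sharp c \<psi> \<and> \<psi> x = u \<and> \<psi> y = v \<longrightarrow> (\<forall>z \<in> Aset c. \<psi> z = \<phi> z)) \<and>
            (\<forall>\<psi>. sharp c \<psi> \<and> inc_line_plane c (line_set c x u) \<psi> \<and> inc_line_plane c (line_set c y v) \<psi>
                 \<longrightarrow> (\<forall>z \<in> Aset c. \<psi> z = \<phi> z))"
    by (rule bwd)
next
  fix L M P Q R
  assume a: "is_line c L \<and> is_line c M \<and> is_point c P \<and> is_point c Q \<and> P \<noteq> Q \<and>
      inc_point_line c P L \<and> inc_point_line c Q L \<and> inc_point_line c P M \<and> inc_point_line c Q M"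
  assume "is_point c R"
  show "inc_point_line c R L \<longleftrightarrow> inc_point_line c R M"
    using a part2_dir[of c L M P Q R] part2_dir[of c M L P Q R] by blast
qed

end
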